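(* Let $\omega\in N\check C^n(X\times E)$ be a non-flat differential $n$-cochain on a product cover and $\eta=\check d\omega$. For multi-indices $(a)=(a_1,\dots,a_r)$ and $(b)=(b_1,\dots,b_k)$, $$T^{(a)}_{(b)}\eta=(-1)^{|(a)|+|(b)|+1}\,d\,T^{(a)}_{(b)}\omega+(-1)^{|(b)|+1}[\delta_aT^{(\cdot)}_{(b)}\omega]^{(a)}+[\delta_bT^{(a)}_{(\cdot)}\omega]_{(b)},$$ where the second term is absent if $|(a)|=1$ and the third term is absent if $|(b)|=1$.
   Context: $X,E$ are closed smooth manifolds with open covers $(U_a)_{a\in\mathcal A}$ and $(U_b)_{b\in\mathcal B}$; the product cover of $X\times E$ consists of $U_{(ab)}=U_a\times U_b$. A non-flat differential $n$-cochain on it is $(H,\omega^n_{(a_1b_1)},\omega^{n-1}_{(a_1b_1)(a_2b_2)},\dots,\omega^{-1}_{(a_1b_1)\dots(a_{n+2}b_{n+2})})$, $H$ a global $(n+1)$-form, $\omega^s$ local $s$-forms ($s\ge0$) on intersections of $n+1-s$ product sets, $\omega^{-1}$ locally constant $2\pi\mathbb Z$-valued; components with repeated index vanish. $\check d=\delta+(-1)^{r+1}d$ on Čech degree $r$ (with $\delta$ the Čech coboundary, $d$ exterior derivative), the top component of $\check d(H,\omega)$ being $H|-d\omega^n$. For $(a)=(a_1..a_r)$, $(b)=(b_1..b_k)$, define the local $(n+2-r-k)$-form $T^{(a)}_{(b)}\omega=\sum_{\gamma\in\mathcal D}(-1)^{A(\gamma)}\omega^{n+2-k-r}_\gamma$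 on $(U_{a_1}\cap\dots\cap U_{a_r})\times(U_{b_1}\cap\dots\cap U_{b_k})$, where $\mathcal D$ is the set of lattice paths $\gamma=((a_{p_1}b_{q_1}),\dots,(a_{p_{r+k-1}}b_{q_{r+k-1}}))$ in the grid $\{(a_pb_q)\}$ from $(a_1b_1)$ to $(a_rb_k)$ moving only right or upward, $A(\gamma)$ is the area between $\gamma$ and the $b$-axis, and $\omega_\gamma=\omega_{(a_{p_1}b_{q_1})\dots(a_{p_{r+k-1}}b_{q_{r+k-1}})}$. $\delta_a$ (resp. $\delta_b$) denotes the Čech coboundary in the first (resp. second) multi-index, e.g. $[\delta_bT^{(a)}_{(\cdot)}\omega]_{(b)}=\sum_{j}(-1)^{j+1}T^{(a)}_{(b_1..\hat b_j..b_k)}\omega$. *)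

theory Defs
  imports "HOL-Analysis.Analysis"
begin

text \<open>Local differential forms are elements of a real vector space 'f;
  the exterior derivative is a linear map d on 'f; restrictions to smaller intersections are
  left implicit (identified). A cochain on the product cover is a function
  w :: ('a \<times> 'b) list \<Rightarrow> 'f, where w [] = H is the global form and w applied to a list of
  m \<ge> 1 product indices is the local (n+1-m)-form on the corresponding intersection.\<close>

definition del_nth :: "nat \<Rightarrow> 'x list \<Rightarrow> 'x list" where
  "del_nth j xs = take j xs @ drop (Suc j) xs"

definition diff_cochain :: "nat \<Rightarrow> ('f::real_vector \<Rightarrow> 'f) \<Rightarrow> (('a \<times> 'b) list \<Rightarrow> 'f) \<Rightarrow> bool" where
  "diff_cochain n d w \<longleftrightarrow>
     (\<forall>t. length t > n + 2 \<longrightarrow> w t = 0) \<and>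
     (\<forall>t. t \<noteq> [] \<and> \<not> distinct t \<longrightarrow> w t = 0) \<and>
     (\<forall>t. length t = n + 2 \<longrightarrow> d (w t) = 0)"

text \<open>The total differential: on Cech degree r (lists of length r+1) it is
  delta + (-1)^(r+1) d; the top component is H| - d w^n. On the global component, dH.\<close>
definition check_d :: "('f::real_vector \<Rightarrow> 'f) \<Rightarrow> ('i list \<Rightarrow> 'f) \<Rightarrow> 'i list \<Rightarrow> 'f" where
  "check_d d w t =
     (if t = [] then d (w [])
      else (\<Sum>j<length t. ((-1::real) ^ j) *\<^sub>R w (del_nth j t))
           + ((-1::real) ^ length t) *\<^sub>R d (w t))"

text \<open>Lattice paths in the grid {(p,q). p < r, q < k} (0-based positions of (a_p b_q))
  from (0,0) to (r-1,k-1), moving right (p+1) or upward (q+1).\<close>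
definition lattice_paths :: "nat \<Rightarrow> nat \<Rightarrow> (nat \<times> nat) list set" where
  "lattice_paths r k = {\<gamma>. \<gamma> \<noteq> [] \<and> hd \<gamma> = (0, 0) \<and> last \<gamma> = (r - 1, k - 1) \<and>
     (\<forall>i < length \<gamma> - 1. \<gamma> ! Suc i = (Suc (fst (\<gamma> ! i)), snd (\<gamma> ! i))
                        \<or> \<gamma> ! Suc i = (fst (\<gamma> ! i), Suc (snd (\<gamma> ! i))))}"

text \<open>Area between the path and the b-axis (the line of grid points (a_1 b_q)):
  each b-step taken at a-position p (0-based) contributes p unit squares.\<close>
definition path_area :: "(nat \<times> nat) list \<Rightarrow> nat" where
  "path_area \<gamma> = (\<Sum>i < length \<gamma> - 1.
      if \<gamma> ! Suc i = (fst (\<gamma> ! i), Suc (snd (\<gamma> ! i))) then fst (\<gamma> ! i) else 0)"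

definition T_op :: "'a list \<Rightarrow> 'b list \<Rightarrow> (('a \<times> 'b) list \<Rightarrow> 'f::real_vector) \<Rightarrow> 'f" where
  "T_op as bs w = (\<Sum>\<gamma>\<in>lattice_paths (length as) (length bs).
      ((-1::real) ^ path_area \<gamma>) *\<^sub>R w (map (\<lambda>(p, q). (as ! p, bs ! q)) \<gamma>))"

definition delta_a_T :: "'a list \<Rightarrow> 'b list \<Rightarrow> (('a \<times> 'b) list \<Rightarrow> 'f::real_vector) \<Rightarrow> 'f" where
  "delta_a_T as bs w = (\<Sum>j<length as. ((-1::real) ^ j) *\<^sub>R T_op (del_nth j as) bs w)"

definition delta_b_T :: "'a list \<Rightarrow> 'b list \<Rightarrow> (('a \<times> 'b) list \<Rightarrow> 'f::real_vector) \<Rightarrow> 'f" where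
  "delta_b_T as bs w = (\<Sum>j<length bs. ((-1::real) ^ j) *\<^sub>R T_op as (del_nth j bs) w)"

end

theory Submission
  imports Defs
begin


fun ok :: "(nat \<times> nat) list \<Rightarrow> bool" where
  "ok (x # y # t) = ((y = (Suc (fst x), snd x) \<or> y = (fst x, Suc (snd x))) \<and> ok (y # t))"
| "ok _ = True"

fun ar :: "(nat \<times> nat) list \<Rightarrow> nat" where
  "ar (x # y # t) = (if y = (fst x, Suc (snd x)) then fst x else 0) + ar (y # t)"
| "ar _ = 0"

lemma ok_iff: "(\<forall>i < length \<gamma> - 1. \<gamma> ! Suc i = (Suc (fst (\<gamma> ! i)), snd (\<gamma> ! i))
                        \<or> \<gamma> ! Suc i = (fst (\<gamma> ! i), Suc (snd (\<gamma> ! i)))) = ok \<gamma>"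
proof (induction \<gamma> rule: ok.induct)
  case (1 x y t)
  have e: "length (x # y # t) - 1 = Suc (length (y # t) - 1)" by simp
  show ?case unfolding e All_less_Suc2 using 1 by simp
qed auto

lemma area_eq: "path_area \<gamma> = ar \<gamma>"
proof (induction \<gamma> rule: ar.induct)
  case (1 x y t)
  have e: "length (x # y # t) - 1 = Suc (length (y # t) - 1)" by simp
  have "path_area (x # y # t) = (if y = (fst x, Suc (snd x)) then fst x else 0) + path_area (y # t)"
    unfolding path_area_def e sum.lessThan_Suc_shift by (simp only: nth_Cons_Suc nth_Cons_0)
  then show ?case using 1 by simp
qed (auto simp: path_area_def)

definition shR :: "nat \<times> nat \<Rightarrow> nat \<times> nat" where "shR z = (Suc (fst z), snd z)"
definition shU :: "nat \<times> nat \<Rightarrow> nat \<times> nat" where "shU z = (fst z, Suc (snd z))"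

lemma ok_shR: "ok (map shR \<gamma>) = ok \<gamma>"
  by (induction \<gamma> rule: ok.induct) (auto simp: shR_def prod_eq_iff)

lemma ok_shU: "ok (map shU \<gamma>) = ok \<gamma>"
  by (induction \<gamma> rule: ok.induct) (auto simp: shU_def prod_eq_iff)

lemma ok_mono: "ok \<gamma> \<Longrightarrow> z \<in> set \<gamma> \<Longrightarrow> fst (hd \<gamma>) \<le> fst z \<and> snd (hd \<gamma>) \<le> snd z"
  by (induction \<gamma> arbitrary: z rule: ok.induct) (auto, fastforce+)

lemma ar_shR: "ok \<gamma> \<Longrightarrow> \<gamma> \<noteq> [] \<Longrightarrow> ar (map shR \<gamma>) + snd (hd \<gamma>) = ar \<gamma> + snd (last \<gamma>)"
  by (induction \<gamma> rule: ok.induct) (auto simp: shR_def prod_eq_iff)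

lemma ar_shU: "ar (map shU \<gamma>) = ar \<gamma>"
  by (induction \<gamma> rule: ar.induct) (auto simp: shU_def prod_eq_iff)

lemma ar_cons: "l \<noteq> [] \<Longrightarrow> ar (x # l) = (if hd l = (fst x, Suc (snd x)) then fst x else 0) + ar l"
  by (cases l) auto

lemma LP_alt: "lattice_paths r k = {\<gamma>. \<gamma> \<noteq> [] \<and> hd \<gamma> = (0, 0) \<and> last \<gamma> = (r - 1, k - 1) \<and> ok \<gamma>}"
  unfolding lattice_paths_def ok_iff by simp


lemma LP_dec: "lattice_paths (Suc r0) (Suc k0) =
   (if r0 = 0 \<and> k0 = 0 then {[(0,0)]} else {})
 \<union> (if r0 > 0 then (\<lambda>\<gamma>. (0,0) # map shR \<gamma>) ` lattice_paths r0 (Suc k0) else {})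
 \<union> (if k0 > 0 then (\<lambda>\<gamma>. (0,0) # map shU \<gamma>) ` lattice_paths (Suc r0) k0 else {})"
  (is "?L = ?R")
proof
  show "?L \<subseteq> ?R"
  proof
    fix \<gamma> assume g: "\<gamma> \<in> ?L"
    then obtain t where gt: "\<gamma> = (0,0) # t" and okg: "ok \<gamma>" and lg: "last \<gamma> = (r0, k0)"
      unfolding LP_alt by (cases \<gamma>) auto
    show "\<gamma> \<in> ?R"
    proof (cases t)
      case Nil
      then show ?thesis using gt lg by auto
    next
      case (Cons y t')
      have okt: "ok t" using okg gt Cons by simp
      have lt: "last t = (r0, k0)" using lg gt Cons by simp
      have y: "y = (1, 0) \<or> y = (0, 1)" using okg gt Cons by auto
      have mono: "\<And>z. z \<in> set t \<Longrightarrow> fst y \<le> fst z \<and> snd y \<le> snd z"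
        using ok_mono[OF okt] Cons by fastforce
      have lin: "last t \<in> set t" using Cons by simp
      show ?thesis
      proof (cases "y = (1, 0)")
        case True
        define g' where "g' = map (\<lambda>z. (fst z - 1, snd z)) t"
        have tm: "t = map shR g'" unfolding g'_def shR_def map_map
          by (rule sym, rule map_idI) (use mono True in \<open>force\<close>)
        have r0: "r0 > 0" using mono[OF lin] True lt by simp
        have "g' \<in> lattice_paths r0 (Suc k0)"
        proof -
          have "ok g'" using okt tm ok_shR by metis
          moreover have "g' \<noteq> []" using Cons g'_def by simp
          moreover have "hd g' = (0,0)" using Cons True g'_def by simp
          moreover have "last g' = (fst (last t) - 1, snd (last t))" using Cons g'_def by (simp add: last_map)
          ultimately show ?thesis unfolding LP_alt using lt True by auto
        qed
        then show ?thesis using r0 gt tm by auto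
      next
        case False
        then have yy: "y = (0, 1)" using y by auto
        define g' where "g' = map (\<lambda>z. (fst z, snd z - 1)) t"
        have tm: "t = map shU g'" unfolding g'_def shU_def map_map
          by (rule sym, rule map_idI) (use mono yy in \<open>force\<close>)
        have k0: "k0 > 0" using mono[OF lin] yy lt by simp
        have "g' \<in> lattice_paths (Suc r0) k0"
        proof -
          have "ok g'" using okt tm ok_shU by metis
          moreover have "g' \<noteq> []" using Cons g'_def by simp
          moreover have "hd g' = (0,0)" using Cons yy g'_def by simp
          moreover have "last g' = (fst (last t), snd (last t) - 1)" using Cons g'_def by (simp add: last_map)
          ultimately show ?thesis unfolding LP_alt using lt yy by auto
        qed
        then show ?thesis using k0 gt tm by auto
      qed
    qed
  qed
next
  show "?R \<subseteq> ?L"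
  proof
    fix \<gamma> assume "\<gamma> \<in> ?R"
    then consider "r0 = 0 \<and> k0 = 0 \<and> \<gamma> = [(0,0)]"
      | g' where "r0 > 0" "g' \<in> lattice_paths r0 (Suc k0)" "\<gamma> = (0,0) # map shR g'"
      | g' where "k0 > 0" "g' \<in> lattice_paths (Suc r0) k0" "\<gamma> = (0,0) # map shU g'"
      by (auto split: if_splits)
    then show "\<gamma> \<in> ?L"
    proof cases
      case 1 then show ?thesis unfolding LP_alt by auto
    next
      case (2 g')
      then obtain u where u: "g' = (0,0) # u" "ok g'" "last g' = (r0 - 1, k0)"
        unfolding LP_alt by (cases g') auto
      show ?thesis
      proof -
        have o1: "ok (map shR g')" using u(2) ok_shR by simp
        have h0: "shR (0,0) = (1,0)" by (simp add: shR_def)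
        have l0: "last (map shR g') = shR (last g')" using u(1) by (simp add: last_map)
        show ?thesis unfolding LP_alt using 2 u o1 h0 l0 by (auto simp: shR_def)
      qed
    next
      case (3 g')
      then obtain u where u: "g' = (0,0) # u" "ok g'" "last g' = (r0, k0 - 1)"
        unfolding LP_alt by (cases g') auto
      show ?thesis
      proof -
        have o1: "ok (map shU g')" using u(2) ok_shU by simp
        have h0: "shU (0,0) = (0,1)" by (simp add: shU_def)
        have l0: "last (map shU g') = shU (last g')" using u(1) by (simp add: last_map)
        show ?thesis unfolding LP_alt using 3 u o1 h0 l0 by (auto simp: shU_def)
      qed
    qed
  qed
qed

lemma LP_finite: "finite (lattice_paths (Suc r0) (Suc k0))"
proof (induction "r0 + k0" arbitrary: r0 k0 rule: less_induct)
  case less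
  have a: "finite (lattice_paths r0 (Suc k0))" if "r0 > 0"
    using less[of "r0 - 1" k0] that by simp
  have b: "finite (lattice_paths (Suc r0) k0)" if "k0 > 0"
    using less[of r0 "k0 - 1"] that by simp
  show ?case unfolding LP_dec using a b by auto
qed


lemma inj_R: "inj_on (\<lambda>\<gamma>. (0::nat,0::nat) # map shR \<gamma>) A"
proof -
  have "inj shR" by (auto simp: inj_def shR_def prod_eq_iff)
  then show ?thesis by (auto intro!: inj_onI simp: inj_map_eq_map)
qed

lemma inj_U: "inj_on (\<lambda>\<gamma>. (0::nat,0::nat) # map shU \<gamma>) A"
proof -
  have "inj shU" by (auto simp: inj_def shU_def prod_eq_iff)
  then show ?thesis by (auto intro!: inj_onI simp: inj_map_eq_map)
qed

lemma piece_R: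
  assumes "as \<noteq> []"
  shows "(\<Sum>\<gamma>\<in>(\<lambda>\<gamma>. (0,0) # map shR \<gamma>) ` lattice_paths (length as) (Suc (length bs)).
            ((-1::real) ^ path_area \<gamma>) *\<^sub>R w (map (\<lambda>(p, q). ((a#as) ! p, (b#bs) ! q)) \<gamma>))
       = ((-1::real) ^ length bs) *\<^sub>R T_op as (b#bs) (\<lambda>t. w ((a,b)#t))"
proof -
  have "(\<Sum>\<gamma>\<in>(\<lambda>\<gamma>. (0,0) # map shR \<gamma>) ` lattice_paths (length as) (Suc (length bs)).
            ((-1::real) ^ path_area \<gamma>) *\<^sub>R w (map (\<lambda>(p, q). ((a#as) ! p, (b#bs) ! q)) \<gamma>))
      = (\<Sum>\<gamma>\<in>lattice_paths (length as) (Suc (length bs)).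
            ((-1::real) ^ path_area ((0,0) # map shR \<gamma>)) *\<^sub>R w (map (\<lambda>(p, q). ((a#as) ! p, (b#bs) ! q)) ((0,0) # map shR \<gamma>)))"
    by (subst sum.reindex[OF inj_R]) simp
  also have "\<dots> = (\<Sum>\<gamma>\<in>lattice_paths (length as) (Suc (length bs)).
            ((-1::real) ^ length bs) *\<^sub>R (((-1::real) ^ path_area \<gamma>) *\<^sub>R w ((a,b) # map (\<lambda>(p, q). (as ! p, (b#bs) ! q)) \<gamma>)))"
  proof (rule sum.cong[OF refl])
    fix \<gamma> assume g: "\<gamma> \<in> lattice_paths (length as) (Suc (length bs))"
    then have ne: "\<gamma> \<noteq> []" and h: "hd \<gamma> = (0,0)" and l: "last \<gamma> = (length as - 1, length bs)"
      and o: "ok \<gamma>" unfolding LP_alt by auto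
    have hm: "hd (map shR \<gamma>) = (1, 0)" using ne h by (simp add: hd_map shR_def)
    have "ar ((0,0) # map shR \<gamma>) = ar (map shR \<gamma>)"
      using ar_cons[of "map shR \<gamma>" "(0,0)"] ne hm by simp
    also have "\<dots> = ar \<gamma> + length bs" using ar_shR[OF o ne] h l by simp
    finally have A: "path_area ((0,0) # map shR \<gamma>) = length bs + path_area \<gamma>" by (simp add: area_eq)
    have M: "map (\<lambda>(p, q). ((a#as) ! p, (b#bs) ! q)) ((0,0) # map shR \<gamma>)
           = (a,b) # map (\<lambda>(p, q). (as ! p, (b#bs) ! q)) \<gamma>"
      by (simp add: shR_def case_prod_beta)
    show "((-1::real) ^ path_area ((0,0) # map shR \<gamma>)) *\<^sub>R w (map (\<lambda>(p, q). ((a#as) ! p, (b#bs) ! q)) ((0,0) # map shR \<gamma>))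
        = ((-1::real) ^ length bs) *\<^sub>R (((-1::real) ^ path_area \<gamma>) *\<^sub>R w ((a,b) # map (\<lambda>(p, q). (as ! p, (b#bs) ! q)) \<gamma>))"
      unfolding A M by (simp add: power_add)
  qed
  also have "\<dots> = ((-1::real) ^ length bs) *\<^sub>R T_op as (b#bs) (\<lambda>t. w ((a,b)#t))"
    unfolding T_op_def scaleR_sum_right by simp
  finally show ?thesis .
qed

lemma piece_U:
  assumes "bs \<noteq> []"
  shows "(\<Sum>\<gamma>\<in>(\<lambda>\<gamma>. (0,0) # map shU \<gamma>) ` lattice_paths (Suc (length as)) (length bs).
            ((-1::real) ^ path_area \<gamma>) *\<^sub>R w (map (\<lambda>(p, q). ((a#as) ! p, (b#bs) ! q)) \<gamma>))
       = T_op (a#as) bs (\<lambda>t. w ((a,b)#t))"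
proof -
  have "(\<Sum>\<gamma>\<in>(\<lambda>\<gamma>. (0,0) # map shU \<gamma>) ` lattice_paths (Suc (length as)) (length bs).
            ((-1::real) ^ path_area \<gamma>) *\<^sub>R w (map (\<lambda>(p, q). ((a#as) ! p, (b#bs) ! q)) \<gamma>))
      = (\<Sum>\<gamma>\<in>lattice_paths (Suc (length as)) (length bs).
            ((-1::real) ^ path_area ((0,0) # map shU \<gamma>)) *\<^sub>R w (map (\<lambda>(p, q). ((a#as) ! p, (b#bs) ! q)) ((0,0) # map shU \<gamma>)))"
    by (subst sum.reindex[OF inj_U]) simp
  also have "\<dots> = (\<Sum>\<gamma>\<in>lattice_paths (Suc (length as)) (length bs).
            ((-1::real) ^ path_area \<gamma>) *\<^sub>R w ((a,b) # map (\<lambda>(p, q). ((a#as) ! p, bs ! q)) \<gamma>))"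
  proof (rule sum.cong[OF refl])
    fix \<gamma> assume g: "\<gamma> \<in> lattice_paths (Suc (length as)) (length bs)"
    then have ne: "\<gamma> \<noteq> []" and h: "hd \<gamma> = (0,0)" unfolding LP_alt by auto
    have hm: "hd (map shU \<gamma>) = (0, 1)" using ne h by (simp add: hd_map shU_def)
    have "ar ((0,0) # map shU \<gamma>) = ar (map shU \<gamma>)"
      using ar_cons[of "map shU \<gamma>" "(0,0)"] ne hm by simp
    also have "\<dots> = ar \<gamma>" by (rule ar_shU)
    finally have A: "path_area ((0,0) # map shU \<gamma>) = path_area \<gamma>" by (simp add: area_eq)
    have M: "map (\<lambda>(p, q). ((a#as) ! p, (b#bs) ! q)) ((0,0) # map shU \<gamma>)
           = (a,b) # map (\<lambda>(p, q). ((a#as) ! p, bs ! q)) \<gamma>"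
      by (simp add: shU_def case_prod_beta)
    show "((-1::real) ^ path_area ((0,0) # map shU \<gamma>)) *\<^sub>R w (map (\<lambda>(p, q). ((a#as) ! p, (b#bs) ! q)) ((0,0) # map shU \<gamma>))
        = ((-1::real) ^ path_area \<gamma>) *\<^sub>R w ((a,b) # map (\<lambda>(p, q). ((a#as) ! p, bs ! q)) \<gamma>)"
      unfolding A M by simp
  qed
  also have "\<dots> = T_op (a#as) bs (\<lambda>t. w ((a,b)#t))"
    unfolding T_op_def by simp
  finally show ?thesis .
qed

lemma T_op_rec:
  "T_op (a#as) (b#bs) w =
     (if as = [] \<and> bs = [] then w [(a,b)] else 0)
   + (if as \<noteq> [] then ((-1::real) ^ length bs) *\<^sub>R T_op as (b#bs) (\<lambda>t. w ((a,b)#t)) else 0)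
   + (if bs \<noteq> [] then T_op (a#as) bs (\<lambda>t. w ((a,b)#t)) else 0)"
proof -
  define F where "F = (\<lambda>\<gamma>. ((-1::real) ^ path_area \<gamma>) *\<^sub>R w (map (\<lambda>(p, q). ((a#as) ! p, (b#bs) ! q)) \<gamma>))"
  define S1 where "S1 = (if length as = 0 \<and> length bs = 0 then {[(0::nat,0::nat)]} else {})"
  define S2 where "S2 = (if length as > 0 then (\<lambda>\<gamma>. (0,0) # map shR \<gamma>) ` lattice_paths (length as) (Suc (length bs)) else {})"
  define S3 where "S3 = (if length bs > 0 then (\<lambda>\<gamma>. (0,0) # map shU \<gamma>) ` lattice_paths (Suc (length as)) (length bs) else {})"
  have LP: "lattice_paths (length (a#as)) (length (b#bs)) = S1 \<union> S2 \<union> S3"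
    unfolding S1_def S2_def S3_def by (simp only: length_Cons LP_dec)
  have fin: "finite (S1 \<union> S2 \<union> S3)" unfolding LP[symmetric] by (simp add: LP_finite)
  have d12: "S1 \<inter> S2 = {}" unfolding S1_def S2_def by auto
  have d123: "(S1 \<union> S2) \<inter> S3 = {}"
  proof -
    have "S1 \<inter> S3 = {}" unfolding S1_def S3_def by auto
    moreover have "S2 \<inter> S3 = {}"
    proof -
      have "x \<notin> S3" if "x \<in> S2" for x
      proof -
        from that obtain g where g: "g \<in> lattice_paths (length as) (Suc (length bs))" "x = (0,0) # map shR g"
          unfolding S2_def by (auto split: if_splits)
        then have "g \<noteq> []" "hd g = (0,0)" unfolding LP_alt by auto
        then have "hd (tl x) = (1,0)" using g by (simp add: hd_map shR_def)
        moreover have "hd (tl y) = (0,1)" if "y \<in> S3" for y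
        proof -
          from that obtain g where g: "g \<in> lattice_paths (Suc (length as)) (length bs)" "y = (0,0) # map shU g"
            unfolding S3_def by (auto split: if_splits)
          then have "g \<noteq> []" "hd g = (0,0)" unfolding LP_alt by auto
          then show ?thesis using g by (simp add: hd_map shU_def)
        qed
        ultimately show ?thesis by force
      qed
      then show ?thesis by blast
    qed
    ultimately show ?thesis by blast
  qed
  have "T_op (a#as) (b#bs) w = sum F (S1 \<union> S2 \<union> S3)"
    unfolding T_op_def F_def LP ..
  also have "\<dots> = sum F S1 + sum F S2 + sum F S3"
    using fin d12 d123 by (simp add: sum.union_disjoint)
  also have "sum F S1 = (if as = [] \<and> bs = [] then w [(a,b)] else 0)"
    unfolding S1_def F_def by (simp add: area_eq)
  also have "sum F S2 = (if as \<noteq> [] then ((-1::real) ^ length bs) *\<^sub>R T_op as (b#bs) (\<lambda>t. w ((a,b)#t)) else 0)"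
    unfolding S2_def F_def using piece_R[where as=as and bs=bs and w=w and a=a and b=b] by auto
  also have "sum F S3 = (if bs \<noteq> [] then T_op (a#as) bs (\<lambda>t. w ((a,b)#t)) else 0)"
    unfolding S3_def F_def using piece_U[where as=as and bs=bs and w=w and a=a and b=b] by auto
  finally show ?thesis .
qed


definition Tr :: "'a list \<Rightarrow> 'b list \<Rightarrow> (('a \<times> 'b) list \<Rightarrow> 'f::real_vector) \<Rightarrow> 'f" where
  "Tr as bs w = (if as = [] \<or> bs = [] then 0 else T_op as bs w)"

definition DA :: "'a list \<Rightarrow> 'b list \<Rightarrow> (('a \<times> 'b) list \<Rightarrow> 'f::real_vector) \<Rightarrow> 'f" where
  "DA as bs w = (\<Sum>j<length as. ((-1::real) ^ j) *\<^sub>R Tr (del_nth j as) bs w)"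

definition DB :: "'a list \<Rightarrow> 'b list \<Rightarrow> (('a \<times> 'b) list \<Rightarrow> 'f::real_vector) \<Rightarrow> 'f" where
  "DB as bs w = (\<Sum>j<length bs. ((-1::real) ^ j) *\<^sub>R Tr as (del_nth j bs) w)"

lemma Tr_nil1[simp]: "Tr [] bs w = 0" and Tr_nil2[simp]: "Tr as [] w = 0"
  by (auto simp: Tr_def)

lemma Tr_rec: "Tr (a#as) (b#bs) w =
     (if as = [] \<and> bs = [] then w [(a,b)] else 0)
   + ((-1::real) ^ length bs) *\<^sub>R Tr as (b#bs) (\<lambda>t. w ((a,b)#t))
   + Tr (a#as) bs (\<lambda>t. w ((a,b)#t))"
  unfolding Tr_def using T_op_rec[of a as b bs w] by auto

lemma Tr_diff: "Tr as bs (\<lambda>t. u t - v t) = Tr as bs u - Tr as bs v"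
  unfolding Tr_def T_op_def by (simp add: scaleR_diff_right sum_subtractf)

lemma del_nth_0[simp]: "del_nth 0 (x#l) = l" by (simp add: del_nth_def)
lemma del_nth_Suc[simp]: "del_nth (Suc j) (x#l) = x # del_nth j l" by (simp add: del_nth_def)
lemma length_del_nth: "j < length l \<Longrightarrow> length (del_nth j l) = length l - 1"
  by (simp add: del_nth_def)
lemma del_nth_nil: "j < length l \<Longrightarrow> (del_nth j l = []) = (length l = 1)"
  using length_del_nth[of j l] by auto

lemma DA_nil[simp]: "DA [] bs w = 0" by (simp add: DA_def)
lemma DB_nil[simp]: "DB as [] w = 0" by (simp add: DB_def)
lemma DA_nil2[simp]: "DA as [] w = 0" by (simp add: DA_def)
lemma DB_nil1[simp]: "DB [] bs w = 0" by (simp add: DB_def)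

lemma DA_shift: "DA (a#al) bl g = Tr al bl g - (\<Sum>j<length al. ((-1::real) ^ j) *\<^sub>R Tr (a # del_nth j al) bl g)"
  unfolding DA_def length_Cons sum.lessThan_Suc_shift by (simp add: sum_negf)

lemma DB_shift: "DB al (b#bl) g = Tr al bl g - (\<Sum>j<length bl. ((-1::real) ^ j) *\<^sub>R Tr al (b # del_nth j bl) g)"
  unfolding DB_def length_Cons sum.lessThan_Suc_shift by (simp add: sum_negf)

lemma check_cons: "check_d d g (x#t) = g t - check_d d (\<lambda>s. g (x#s)) t"
proof (cases "t = []")
  case True then show ?thesis by (simp add: check_d_def)
next
  case False
  then show ?thesis
    unfolding check_d_def length_Cons sum.lessThan_Suc_shift
    by (simp add: sum_negf algebra_simps)
qed

lemma sum_single_if: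
  "(\<Sum>j<length al. ((-1::real) ^ j) *\<^sub>R (if del_nth j al = [] \<and> P then (c::'f::real_vector) else 0))
   = (if length al = 1 \<and> P then c else 0)"
proof (cases "length al = 1")
  case True then show ?thesis by (simp add: del_nth_nil)
next
  case False
  then have "\<And>j. j < length al \<Longrightarrow> del_nth j al \<noteq> []" using del_nth_nil by blast
  then show ?thesis using False by simp
qed

lemma DA_cons: "DA (a#al) (b#bl) g = Tr al (b#bl) g
   - ((-1::real) ^ length bl) *\<^sub>R DA al (b#bl) (\<lambda>t. g ((a,b)#t))
   - Tr al bl (\<lambda>t. g ((a,b)#t)) + DA (a#al) bl (\<lambda>t. g ((a,b)#t))
   - (if length al = 1 \<and> bl = [] then g [(a,b)] else 0)"
proof -
  let ?g = "\<lambda>t. g ((a,b)#t)"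
  have "(\<Sum>j<length al. ((-1::real) ^ j) *\<^sub>R Tr (a # del_nth j al) (b#bl) g)
     = (\<Sum>j<length al. ((-1::real) ^ j) *\<^sub>R (if del_nth j al = [] \<and> bl = [] then g [(a,b)] else 0))
     + ((-1::real) ^ length bl) *\<^sub>R DA al (b#bl) ?g
     + (\<Sum>j<length al. ((-1::real) ^ j) *\<^sub>R Tr (a # del_nth j al) bl ?g)"
    unfolding Tr_rec DA_def by (simp add: scaleR_add_right sum.distrib scaleR_sum_right algebra_simps)
  also have "\<dots> = (if length al = 1 \<and> bl = [] then g [(a,b)] else 0)
     + ((-1::real) ^ length bl) *\<^sub>R DA al (b#bl) ?g
     + (Tr al bl ?g - DA (a#al) bl ?g)"
    unfolding sum_single_if DA_shift[of a al bl ?g] by simp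
  finally show ?thesis unfolding DA_shift[of a al "b#bl" g] by (simp add: algebra_simps)
qed

lemma DB_cons: "DB (a#al) (b#bl) g = Tr (a#al) bl g
   + ((-1::real) ^ length bl) *\<^sub>R (Tr al bl (\<lambda>t. g ((a,b)#t)) - DB al (b#bl) (\<lambda>t. g ((a,b)#t)))
   - DB (a#al) bl (\<lambda>t. g ((a,b)#t))
   - (if al = [] \<and> length bl = 1 then g [(a,b)] else 0)"
proof -
  let ?g = "\<lambda>t. g ((a,b)#t)"
  have s1: "(\<Sum>j<length bl. ((-1::real) ^ j) *\<^sub>R (if al = [] \<and> del_nth j bl = [] then g [(a,b)] else 0))
      = (if al = [] \<and> length bl = 1 then g [(a,b)] else 0)"
    using sum_single_if[of bl "al = []" "g [(a,b)]"] by (simp add: conj_commute)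
  have s2: "(\<Sum>j<length bl. ((-1::real) ^ j) *\<^sub>R (((-1::real) ^ length (del_nth j bl)) *\<^sub>R Tr al (b # del_nth j bl) ?g))
      = - ((-1::real) ^ length bl) *\<^sub>R (Tr al bl ?g - DB al (b#bl) ?g)"
  proof (cases bl)
    case Nil then show ?thesis by (simp add: DB_def)
  next
    case (Cons c cl)
    have "(\<Sum>j<length bl. ((-1::real) ^ j) *\<^sub>R (((-1::real) ^ length (del_nth j bl)) *\<^sub>R Tr al (b # del_nth j bl) ?g))
       = (\<Sum>j<length bl. ((-1::real) ^ length cl) *\<^sub>R (((-1::real) ^ j) *\<^sub>R Tr al (b # del_nth j bl) ?g))"
      by (rule sum.cong[OF refl]) (simp add: length_del_nth Cons)
    also have "\<dots> = ((-1::real) ^ length cl) *\<^sub>R (Tr al bl ?g - DB al (b#bl) ?g)"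
      unfolding DB_shift[of al b bl ?g] by (simp add: scaleR_sum_right)
    finally show ?thesis using Cons by simp
  qed
  have "(\<Sum>j<length bl. ((-1::real) ^ j) *\<^sub>R Tr (a#al) (b # del_nth j bl) g)
     = (\<Sum>j<length bl. ((-1::real) ^ j) *\<^sub>R (if al = [] \<and> del_nth j bl = [] then g [(a,b)] else 0))
     + (\<Sum>j<length bl. ((-1::real) ^ j) *\<^sub>R (((-1::real) ^ length (del_nth j bl)) *\<^sub>R Tr al (b # del_nth j bl) ?g))
     + DB (a#al) bl ?g"
    unfolding Tr_rec DB_def by (simp add: scaleR_add_right sum.distrib)
  also have "\<dots> = (if al = [] \<and> length bl = 1 then g [(a,b)] else 0)
     - ((-1::real) ^ length bl) *\<^sub>R (Tr al bl ?g - DB al (b#bl) ?g) + DB (a#al) bl ?g"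
    unfolding s1 s2 by simp
  finally show ?thesis unfolding DB_shift[of "a#al" b bl g] by (simp add: algebra_simps)
qed


lemma main_gen:
  assumes lin: "linear d"
  shows "Tr as bs (check_d d g) =
      ((-1::real) ^ (length as + length bs + 1)) *\<^sub>R d (Tr as bs g)
    + ((-1::real) ^ (length bs + 1)) *\<^sub>R DA as bs g + DB as bs g
    + (if length as = 1 \<and> length bs = 1 then g [] else 0)"
proof (induction "length as + length bs" arbitrary: as bs g rule: less_induct)
  case less
  have d0: "d 0 = 0" using lin by (simp add: linear_0)
  consider "as = []" | "bs = []" | a al b bl where "as = a#al" "bs = b#bl"
    by (cases as; cases bs) auto
  then show ?case
  proof cases
    case 1 then show ?thesis by (simp add: d0)
  next
    case 2 then show ?thesis by (simp add: d0)
  next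
    case 3
    let ?g = "\<lambda>t. g ((a,b)#t)"
    show ?thesis
    proof (cases "al = [] \<and> bl = []")
      case True
      then show ?thesis using 3 by (simp add: Tr_rec check_d_def DA_def DB_def)
    next
      case False
      have C: "(\<lambda>t. check_d d g ((a,b)#t)) = (\<lambda>t. g t - check_d d ?g t)"
        by (simp add: check_cons)
      have L: "Tr (a#al) (b#bl) (check_d d g) =
          ((-1::real) ^ length bl) *\<^sub>R (Tr al (b#bl) g - Tr al (b#bl) (check_d d ?g))
          + (Tr (a#al) bl g - Tr (a#al) bl (check_d d ?g))"
        using False unfolding 3 Tr_rec C Tr_diff by auto
      have IH1: "Tr al (b#bl) (check_d d ?g) =
          ((-1::real) ^ (length al + length (b#bl) + 1)) *\<^sub>R d (Tr al (b#bl) ?g)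
        + ((-1::real) ^ (length (b#bl) + 1)) *\<^sub>R DA al (b#bl) ?g + DB al (b#bl) ?g
        + (if length al = 1 \<and> length (b#bl) = 1 then ?g [] else 0)"
        by (rule less) (simp add: 3)
      have IH2: "Tr (a#al) bl (check_d d ?g) =
          ((-1::real) ^ (length (a#al) + length bl + 1)) *\<^sub>R d (Tr (a#al) bl ?g)
        + ((-1::real) ^ (length bl + 1)) *\<^sub>R DA (a#al) bl ?g + DB (a#al) bl ?g
        + (if length (a#al) = 1 \<and> length bl = 1 then ?g [] else 0)"
        by (rule less) (simp add: 3)
      have D: "d (Tr (a#al) (b#bl) g) = ((-1::real) ^ length bl) *\<^sub>R d (Tr al (b#bl) ?g) + d (Tr (a#al) bl ?g)"
        using False unfolding 3 Tr_rec using d0 by (auto simp add: linear_add[OF lin] linear_scale[OF lin])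
      have F: "\<not> (length al = 0 \<and> length bl = 0)" using False by auto
      show ?thesis
        unfolding 3 L D DA_cons DB_cons IH1 IH2 using F
        apply (cases "even (length bl)"; cases "even (length al)")
        apply (simp_all add: algebra_simps)
        apply auto
        done
    qed
  qed
qed

lemma DA_eq: "length as \<ge> 2 \<Longrightarrow> bs \<noteq> [] \<Longrightarrow> DA as bs w = delta_a_T as bs w"
  unfolding DA_def delta_a_T_def
proof (rule sum.cong[OF refl])
  fix j assume "length as \<ge> 2" "bs \<noteq> []" "j \<in> {..<length as}"
  then have "del_nth j as \<noteq> []" using del_nth_nil[of j as] by auto
  then show "(-1) ^ j *\<^sub>R Tr (del_nth j as) bs w = (-1) ^ j *\<^sub>R T_op (del_nth j as) bs w"
    using \<open>bs \<noteq> []\<close> by (simp add: Tr_def)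
qed

lemma DB_eq: "length bs \<ge> 2 \<Longrightarrow> as \<noteq> [] \<Longrightarrow> DB as bs w = delta_b_T as bs w"
  unfolding DB_def delta_b_T_def
proof (rule sum.cong[OF refl])
  fix j assume "length bs \<ge> 2" "as \<noteq> []" "j \<in> {..<length bs}"
  then have "del_nth j bs \<noteq> []" using del_nth_nil[of j bs] by auto
  then show "(-1) ^ j *\<^sub>R Tr as (del_nth j bs) w = (-1) ^ j *\<^sub>R T_op as (del_nth j bs) w"
    using \<open>as \<noteq> []\<close> by (simp add: Tr_def)
qed

lemma DA_one: "length as = 1 \<Longrightarrow> DA as bs w = 0"
  by (cases as) (auto simp: DA_def)

lemma DB_one: "length bs = 1 \<Longrightarrow> DB as bs w = 0"
  by (cases bs) (auto simp: DB_def)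

theorem mainTheorem12:
  fixes n :: nat
    and d :: "'f::real_vector \<Rightarrow> 'f"
    and w :: "('a \<times> 'b) list \<Rightarrow> 'f"
    and as :: "'a list" and bs :: "'b list"
  assumes "linear d"
    and "diff_cochain n d w"
    and "as \<noteq> []" and "bs \<noteq> []"
    and "length as \<ge> 2 \<or> length bs \<ge> 2"
  shows "T_op as bs (check_d d w) =
           ((-1::real) ^ (length as + length bs + 1)) *\<^sub>R d (T_op as bs w)
         + (if length as = 1 then 0 else ((-1::real) ^ (length bs + 1)) *\<^sub>R delta_a_T as bs w)
         + (if length bs = 1 then 0 else delta_b_T as bs w)"
proof -
  have la: "length as \<ge> 1" and lb: "length bs \<ge> 1" using assms(3,4) by (auto simp: Suc_le_eq)
  have TT: "\<And>v. Tr as bs v = T_op as bs v" using assms(3,4) by (simp add: Tr_def)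
  have A: "((-1::real) ^ (length bs + 1)) *\<^sub>R DA as bs w
      = (if length as = 1 then 0 else ((-1::real) ^ (length bs + 1)) *\<^sub>R delta_a_T as bs w)"
    using la assms(4) DA_eq[of as bs w] DA_one[of as bs w] by auto
  have B: "DB as bs w = (if length bs = 1 then 0 else delta_b_T as bs w)"
    using lb assms(3) DB_eq[of bs as w] DB_one[of bs as w] by auto
  have C: "\<not> (length as = 1 \<and> length bs = 1)" using assms(5) by auto
  show ?thesis using main_gen[OF assms(1), of as bs w] unfolding TT A B using C by auto
qed

end
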